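(* Let $G$ be a signed cyclic graph and let $D_G$ be a virtual link diagram associated with $G$. Then $D_G$ is checkerboard colorable.
   Context: A cyclic graph is a finite graph together with a cyclic ordering of the half-edges at each vertex (equivalently, a graph cellularly embedded in a closed orientable surface); a signed cyclic graph additionally has each edge labelled $+$ or $-$. Given a signed cyclic graph $G$, view it as cellularly embedded in a closed oriented surface and perform the medial construction: place a real crossing at the midpoint of each edge $e$ and join the crossings around each face, obtaining a link diagram on the surface; the crossing at $e$ is chosen so that, if $e$ is positive, its $B$-smoothing separates the two sides along $e$ (following the boundaries of the endpoints of $e$) and its $A$-smoothing connects across $e$; for a negative edge the roles of $A$ and $B$ are exchanged ($A$-, $B$-smoothings in Kauffman's standard sense). Immersing this surface diagram generically in the plane, marking artefacts of the immersion as virtual crossings, gives a virtual link diagram; any such diagram is called a virtual link diagram associated with $G$. A virtual link diagram is checkerboard colorable if one can color a small neighbourhood of one side of each arc so that near each real crossing the colored sides alternate around the crossing, and near each virtual crossing the colorings of the two strands pass through independently of each other. *)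

theory Defs
  imports Main
begin

text \<open>A cyclic graph is given by a finite set H of half-edges, a permutation
  sigma of H (the cyclic order of the half-edges around each vertex; vertices
  are the sigma-orbits) and a fixed-point-free involution alpha on H (edges are
  the alpha-orbits).  This is the standard combinatorial description of a graph
  cellularly embedded in a closed oriented surface.\<close>

definition cyclic_graph :: "'h set \<Rightarrow> ('h \<Rightarrow> 'h) \<Rightarrow> ('h \<Rightarrow> 'h) \<Rightarrow> bool" where
  "cyclic_graph H \<sigma> \<alpha> \<longleftrightarrow>
     finite H \<and> bij_betw \<sigma> H H \<and>
     (\<forall>h\<in>H. \<alpha> h \<in> H \<and> \<alpha> h \<noteq> h \<and> \<alpha> (\<alpha> h) = h)"

text \<open>A signing: every edge gets a sign (True = positive), i.e. both half-edges
  of an edge carry the same sign.\<close>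

definition edge_signing :: "'h set \<Rightarrow> ('h \<Rightarrow> 'h) \<Rightarrow> ('h \<Rightarrow> bool) \<Rightarrow> bool" where
  "edge_signing H \<alpha> sg \<longleftrightarrow> (\<forall>h\<in>H. sg (\<alpha> h) = sg h)"

text \<open>A virtual link diagram is modelled by its underlying 4-valent plane map:
  a finite set VD of darts (ends of edge segments at crossings), the
  counterclockwise rotation rot at each crossing (orbits of size exactly 4),
  the fixed-point-free involution arc joining the two ends of each edge segment,
  the predicate isreal marking real (as opposed to virtual) crossings, and for
  real crossings the predicate over marking the two darts of the over-strand.\<close>

definition orbit :: "('a \<Rightarrow> 'a) \<Rightarrow> 'a \<Rightarrow> 'a set" where
  "orbit f x = {(f ^^ n) x | n. True}"

definition map_component :: "('a \<Rightarrow> 'a) \<Rightarrow> ('a \<Rightarrow> 'a) \<Rightarrow> 'a \<Rightarrow> 'a set" where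
  "map_component r a x = {y. (\<lambda>u v. v = r u \<or> v = a u)\<^sup>*\<^sup>* x y}"

text \<open>Planarity: every connected component of the map has Euler characteristic 2
  (vertices - edges + faces = 2), faces being the orbits of rot o arc.\<close>

definition planar_map :: "'d set \<Rightarrow> ('d \<Rightarrow> 'd) \<Rightarrow> ('d \<Rightarrow> 'd) \<Rightarrow> bool" where
  "planar_map VD rot arc \<longleftrightarrow>
     (\<forall>x\<in>VD. let C = map_component rot arc x in
        card (orbit rot ` C) + card (orbit (rot \<circ> arc) ` C) = card (orbit arc ` C) + 2)"

definition virtual_link_diagram ::
  "'d set \<Rightarrow> ('d \<Rightarrow> 'd) \<Rightarrow> ('d \<Rightarrow> 'd) \<Rightarrow> ('d \<Rightarrow> bool) \<Rightarrow> ('d \<Rightarrow> bool) \<Rightarrow> bool" where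
  "virtual_link_diagram VD rot arc isreal over \<longleftrightarrow>
     finite VD \<and> bij_betw rot VD VD \<and>
     (\<forall>d\<in>VD. (rot ^^ 4) d = d \<and> rot (rot d) \<noteq> d) \<and>
     (\<forall>d\<in>VD. arc d \<in> VD \<and> arc d \<noteq> d \<and> arc (arc d) = d) \<and>
     (\<forall>d\<in>VD. isreal (rot d) = isreal d) \<and>
     (\<forall>d\<in>VD. isreal d \<longrightarrow> over (rot (rot d)) = over d \<and> over (rot d) \<noteq> over d) \<and>
     planar_map VD rot arc"

text \<open>Following a strand from a dart d: leave along the edge segment, and pass
  straight through virtual crossings (dart x continues as the opposite dart
  rot (rot x)).  strand_reach d e: the strand leaving d reaches dart e, having
  passed only through virtual crossings in between.\<close>

inductive strand_reach :: "('d \<Rightarrow> 'd) \<Rightarrow> ('d \<Rightarrow> 'd) \<Rightarrow> ('d \<Rightarrow> bool) \<Rightarrow> 'd \<Rightarrow> 'd \<Rightarrow> bool"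
  for rot arc isreal where
  start: "strand_reach rot arc isreal d (arc d)"
| pass: "strand_reach rot arc isreal d x \<Longrightarrow> \<not> isreal x \<Longrightarrow>
         strand_reach rot arc isreal d (arc (rot (rot x)))"

text \<open>Crossings correspond to edges of G.  The four ends of the crossing at the
  edge {g, alpha g} are (g,True), (g,False), (alpha g,True), (alpha g,False):
  (g,True) is the end heading along the corner (g, sigma g) and (g,False) the
  end heading along the corner (sigma^-1 g, g).  Counterclockwise order:
  (g,True), (g,False), (alpha g,True), (alpha g,False).  The corner between
  (g,True) and (g,False) is the region of the vertex at g; the corner between
  (g,False) and (alpha g,True) is a face region.\<close>

definition med_rot :: "('h \<Rightarrow> 'h) \<Rightarrow> 'h \<times> bool \<Rightarrow> 'h \<times> bool" where
  "med_rot \<alpha> x = (if snd x then (fst x, False) else (\<alpha> (fst x), True))"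

definition med_arc :: "'h set \<Rightarrow> ('h \<Rightarrow> 'h) \<Rightarrow> 'h \<times> bool \<Rightarrow> 'h \<times> bool" where
  "med_arc H \<sigma> x = (if snd x then (\<sigma> (fst x), False) else (the_inv_into H \<sigma> (fst x), True))"

text \<open>By Kauffman's convention, the A-regions at a crossing
  are the corners (o, rot o) swept counterclockwise by the over-strand darts o.
  For a positive edge the A-smoothing connects across e (joins the two vertex
  corners), so the over darts are the (g,True); for negative edges the roles
  are exchanged.\<close>

definition med_over :: "('h \<Rightarrow> bool) \<Rightarrow> 'h \<times> bool \<Rightarrow> bool" where
  "med_over sg x = (snd x = sg (fst x))"

text \<open>A virtual link diagram is associated with G when its abstract link diagram
  (real crossings with their cyclic orders and crossing information, joined by
  the strands through virtual crossings) is, orientation-preservingly,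
  isomorphic to the medial diagram of G, and it has no extra components
  consisting only of virtual crossings.\<close>

definition associated_with ::
  "'h set \<Rightarrow> ('h \<Rightarrow> 'h) \<Rightarrow> ('h \<Rightarrow> 'h) \<Rightarrow> ('h \<Rightarrow> bool) \<Rightarrow>
   'd set \<Rightarrow> ('d \<Rightarrow> 'd) \<Rightarrow> ('d \<Rightarrow> 'd) \<Rightarrow> ('d \<Rightarrow> bool) \<Rightarrow> ('d \<Rightarrow> bool) \<Rightarrow> bool" where
  "associated_with H \<sigma> \<alpha> sg VD rot arc isreal over \<longleftrightarrow>
     (\<exists>f. bij_betw f (H \<times> UNIV) {d\<in>VD. isreal d} \<and>
        (\<forall>x\<in>H \<times> UNIV.
           f (med_rot \<alpha> x) = rot (f x) \<and>
           strand_reach rot arc isreal (f x) (f (med_arc H \<sigma> x)) \<and>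
           over (f x) = med_over sg x)) \<and>
     (\<forall>x\<in>VD. \<not> isreal x \<longrightarrow> (\<exists>d\<in>VD. isreal d \<and> strand_reach rot arc isreal d x))"

text \<open>col d = True means: the coloured side of the edge segment at dart d is the
  left side when facing outward along d from its crossing.  Conditions: the
  coloured side is a well-defined side of each edge segment (left at one end is
  right at the other); at real crossings the coloured sides alternate; at
  virtual crossings each strand's colouring passes straight through.\<close>

definition checkerboard_colorable ::
  "'d set \<Rightarrow> ('d \<Rightarrow> 'd) \<Rightarrow> ('d \<Rightarrow> 'd) \<Rightarrow> ('d \<Rightarrow> bool) \<Rightarrow> bool" where
  "checkerboard_colorable VD rot arc isreal \<longleftrightarrow>
     (\<exists>col :: 'd \<Rightarrow> bool. \<forall>d\<in>VD.
        col (arc d) \<noteq> col d \<and>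
        (isreal d \<longrightarrow> col (rot d) \<noteq> col d) \<and>
        (\<not> isreal d \<longrightarrow> col (rot (rot d)) \<noteq> col d))"

end

theory Submission
  imports Defs
begin

locale VL =
  fixes VD :: "'d set" and rot arc :: "'d \<Rightarrow> 'd" and isreal :: "'d \<Rightarrow> bool"
  assumes rotin: "d \<in> VD \<Longrightarrow> rot d \<in> VD"
    and rotinj: "inj_on rot VD"
    and rot4: "d \<in> VD \<Longrightarrow> rot (rot (rot (rot d))) = d"
    and arcin: "d \<in> VD \<Longrightarrow> arc d \<in> VD"
    and arcarc: "d \<in> VD \<Longrightarrow> arc (arc d) = d"
    and realrot: "d \<in> VD \<Longrightarrow> isreal (rot d) = isreal d"
begin

abbreviation sr where "sr \<equiv> strand_reach rot arc isreal"

definition p where "p x = arc (rot (rot x))"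

lemma sr_in: "sr d x \<Longrightarrow> d \<in> VD \<Longrightarrow> x \<in> VD"
  by (induction rule: strand_reach.induct) (auto simp: arcin rotin)

lemma rr_eq: "x \<in> VD \<Longrightarrow> z \<in> VD \<Longrightarrow> rot (rot x) = rot (rot z) \<Longrightarrow> x = z"
  using rotinj rotin by (metis inj_onD)

lemma arc_eq: "x \<in> VD \<Longrightarrow> z \<in> VD \<Longrightarrow> arc x = arc z \<Longrightarrow> x = z"
  using arcarc by metis

lemma uniq: "sr d x \<Longrightarrow> d \<in> VD \<Longrightarrow> isreal d \<Longrightarrow> sr d' x \<Longrightarrow> d' \<in> VD \<Longrightarrow> isreal d' \<Longrightarrow> d = d'"
proof (induction arbitrary: d' rule: strand_reach.induct)
  case (start d)
  note S = start
  from start(3) show ?case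
  proof (cases rule: strand_reach.cases)
    case start
    then show ?thesis using arc_eq S by (metis)
  next
    case (pass z)
    have z: "z \<in> VD" using sr_in pass(2) start by blast
    have "d = rot (rot z)" using arc_eq[of d "rot (rot z)"] pass(1) z rotin start by auto
    then show ?thesis using realrot z rotin pass start by metis
  qed
next
  case (pass d x)
  have x: "x \<in> VD" using sr_in pass.hyps(1) pass.prems(1) by blast
  have nx: "\<not> isreal x" by (rule pass.hyps(2))
  have dV: "d' \<in> VD" "isreal d'" using pass.prems by auto
  have IH: "\<And>d'. sr d' x \<Longrightarrow> d' \<in> VD \<Longrightarrow> isreal d' \<Longrightarrow> d = d'"
    using pass.IH pass.prems(1,2) by blast
  from pass.prems(3) show ?case
  proof (cases rule: strand_reach.cases)
    case start
    have "d' = rot (rot x)" using arc_eq[of d' "rot (rot x)"] start x rotin dV by auto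
    then show ?thesis using realrot x rotin dV nx by metis
  next
    case (pass z)
    have z: "z \<in> VD" using sr_in pass(2) dV by blast
    have "rot (rot z) = rot (rot x)" using arc_eq pass(1) x z rotin by metis
    then have "z = x" using rr_eq x z by blast
    then show ?thesis using IH pass(2) dV by blast
  qed
qed

lemma idx_in: "d \<in> VD \<Longrightarrow> (p^^k) (arc d) \<in> VD"
  by (induction k) (auto simp: p_def arcin rotin)

lemma sr_idx: "sr d x \<Longrightarrow> \<exists>k. x = (p^^k) (arc d) \<and> (\<forall>j<k. \<not> isreal ((p^^j) (arc d)))"
proof (induction rule: strand_reach.induct)
  case (start d)
  then show ?case by (rule_tac x=0 in exI) auto
next
  case (pass d x)
  then obtain k where k: "x = (p^^k) (arc d)" "\<forall>j<k. \<not> isreal ((p^^j) (arc d))" by blast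
  have "(p^^Suc k) (arc d) = arc (rot (rot x))" using k by (simp add: p_def[of "(p^^k) (arc d)"])
  then show ?case
    apply (rule_tac x="Suc k" in exI)
    using k pass(2) by (auto simp: less_Suc_eq)
qed

lemma idx_sr: "(\<forall>j<k. \<not> isreal ((p^^j) (arc d))) \<Longrightarrow> sr d ((p^^k) (arc d))"
proof (induction k)
  case 0
  then show ?case by (simp add: strand_reach.start)
next
  case (Suc k)
  then have "sr d ((p^^k) (arc d))" by auto
  moreover have "\<not> isreal ((p^^k) (arc d))" using Suc by auto
  ultimately have "sr d (arc (rot (rot ((p^^k) (arc d)))))" using strand_reach.pass by fast
  then show ?case by (simp add: p_def[of "(p^^k) (arc d)"])
qed

lemma backw:
  assumes d: "d \<in> VD" and e: "e = (p^^m) (arc d)"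
    and nr: "\<forall>j<m. \<not> isreal ((p^^j) (arc d))" and jm: "j < m"
  shows "sr e (rot (rot ((p^^j) (arc d))))"
proof -
  have "\<forall>j. j + i + 1 = m \<longrightarrow> sr e (rot (rot ((p^^j) (arc d))))" for i
  proof (induction i)
    case 0
    show ?case
    proof (intro allI impI)
      fix j assume "j + 0 + 1 = m"
      then have m: "m = Suc j" by simp
      have "arc e = rot (rot ((p^^j) (arc d)))"
        using e m arcarc idx_in[OF d, of j] rotin by (simp add: p_def)
      then show "sr e (rot (rot ((p^^j) (arc d))))" using strand_reach.start[of rot arc isreal e] by simp
    qed
  next
    case (Suc i)
    show ?case
    proof (intro allI impI)
      fix j assume jm: "j + Suc i + 1 = m"
      let ?a = "(p^^Suc j) (arc d)"
      have h: "sr e (rot (rot ?a))" using Suc jm by (metis add_Suc add_Suc_shift)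
      have aV: "?a \<in> VD" using idx_in d by blast
      have "\<not> isreal ?a" using nr[rule_format, of "Suc j"] jm by linarith
      then have "\<not> isreal (rot (rot ?a))" using realrot aV rotin by metis
      then have "sr e (arc (rot (rot (rot (rot ?a)))))" using h strand_reach.pass by fast
      moreover have "arc (rot (rot (rot (rot ?a)))) = rot (rot ((p^^j) (arc d)))"
        using rot4[OF aV] arcarc idx_in[OF d, of j] rotin by (simp add: p_def)
      ultimately show "sr e (rot (rot ((p^^j) (arc d))))" by simp
    qed
  qed
  then show ?thesis using jm by (metis Suc_eq_plus1 add.commute le_add_diff_inverse2 less_imp_Suc_add)
qed

end


theorem lemma3p1:
  fixes H :: "'h set" and \<sigma> \<alpha> :: "'h \<Rightarrow> 'h" and sg :: "'h \<Rightarrow> bool"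
    and VD :: "'d set" and rot arc :: "'d \<Rightarrow> 'd" and isreal over :: "'d \<Rightarrow> bool"
  assumes "cyclic_graph H \<sigma> \<alpha>"
    and "edge_signing H \<alpha> sg"
    and "virtual_link_diagram VD rot arc isreal over"
    and "associated_with H \<sigma> \<alpha> sg VD rot arc isreal over"
  shows "checkerboard_colorable VD rot arc isreal"
proof -
  have cg: "finite H" "bij_betw \<sigma> H H" "\<And>h. h \<in> H \<Longrightarrow> \<alpha> h \<in> H"
    using assms(1) unfolding cyclic_graph_def by auto
  have vl: "bij_betw rot VD VD" "\<And>d. d \<in> VD \<Longrightarrow> (rot ^^ 4) d = d"
    "\<And>d. d \<in> VD \<Longrightarrow> arc d \<in> VD \<and> arc (arc d) = d"
    "\<And>d. d \<in> VD \<Longrightarrow> isreal (rot d) = isreal d"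
    using assms(3) unfolding virtual_link_diagram_def by auto
  interpret V: VL VD rot arc isreal
  proof
    show "\<And>d. d \<in> VD \<Longrightarrow> rot d \<in> VD" using vl(1) bij_betwE by blast
    show "inj_on rot VD" using vl(1) bij_betw_imp_inj_on by blast
    show "\<And>d. d \<in> VD \<Longrightarrow> rot (rot (rot (rot d))) = d" using vl(2) by (simp add: numeral_eq_Suc)
  qed (use vl in auto)
  obtain f where fb: "bij_betw f (H \<times> UNIV) {d\<in>VD. isreal d}"
    and fr: "\<And>x. x \<in> H \<times> UNIV \<Longrightarrow> f (med_rot \<alpha> x) = rot (f x)"
    and fs: "\<And>x. x \<in> H \<times> UNIV \<Longrightarrow> V.sr (f x) (f (med_arc H \<sigma> x))"
    and allr: "\<And>x. x \<in> VD \<Longrightarrow> \<not> isreal x \<Longrightarrow> \<exists>d\<in>VD. isreal d \<and> V.sr d x"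
    using assms(4) unfolding associated_with_def by blast
  define colr where "colr x = snd (inv_into (H \<times> UNIV) f x)" for x
  define col where "col x = (if isreal x then colr x else (\<exists>d\<in>VD. isreal d \<and> V.sr d x \<and> \<not> colr d))" for x
  have F1: "f y \<in> VD" "isreal (f y)" "colr (f y) = snd y" if "y \<in> H \<times> UNIV" for y
    using that fb unfolding colr_def bij_betw_def by (auto simp: inv_into_f_f)
  have F2: "\<exists>y\<in>H \<times> UNIV. d = f y" if "d \<in> VD" "isreal d" for d
  proof -
    have "d \<in> f ` (H \<times> UNIV)" using that fb unfolding bij_betw_def by auto
    then show ?thesis by blast
  qed
  have F3: "med_arc H \<sigma> y \<in> H \<times> UNIV" "snd (med_arc H \<sigma> y) = (\<not> snd y)"
    "med_rot \<alpha> y \<in> H \<times> UNIV" "snd (med_rot \<alpha> y) = (\<not> snd y)" if "y \<in> H \<times> UNIV" for y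
  proof -
    obtain h b where y: "y = (h, b)" "h \<in> H" using \<open>y \<in> H \<times> UNIV\<close> by (cases y) auto
    have "\<sigma> h \<in> H" using cg(2) y bij_betwE by blast
    moreover have "the_inv_into H \<sigma> h \<in> H"
      using cg(2) y by (metis bij_betw_def the_inv_into_into order_refl)
    ultimately show "med_arc H \<sigma> y \<in> H \<times> UNIV" "snd (med_arc H \<sigma> y) = (\<not> snd y)"
      using y by (auto simp: med_arc_def)
    show "med_rot \<alpha> y \<in> H \<times> UNIV" "snd (med_rot \<alpha> y) = (\<not> snd y)"
      using y cg(3) by (auto simp: med_rot_def)
  qed
  have colv: "col x = (\<not> colr d)" if "x \<in> VD" "\<not> isreal x" "d \<in> VD" "isreal d" "V.sr d x" for x d
    using that V.uniq unfolding col_def by metis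
  have P2: "col (rot (rot x)) \<noteq> col x" if xV: "x \<in> VD" and nx: "\<not> isreal x" for x
  proof -
    obtain d where d: "d \<in> VD" "isreal d" "V.sr d x" using allr xV nx by blast
    obtain y where y: "y \<in> H \<times> UNIV" "d = f y" using F2 d by blast
    define e where "e = f (med_arc H \<sigma> y)"
    have eR: "e \<in> VD" "isreal e" "colr e = (\<not> snd y)" using F1 F3 y unfolding e_def by auto
    obtain k where k: "x = (V.p^^k) (arc d)" "\<forall>j<k. \<not> isreal ((V.p^^j) (arc d))"
      using V.sr_idx d(3) by blast
    obtain m where m: "e = (V.p^^m) (arc d)" "\<forall>j<m. \<not> isreal ((V.p^^j) (arc d))"
      using V.sr_idx fs[OF y(1)] y(2) e_def by blast
    have "k < m"
    proof (rule ccontr)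
      assume "\<not> k < m"
      then have "m < k \<or> m = k" by auto
      then show False using k m nx eR by auto
    qed
    then have "V.sr e (rot (rot x))" using V.backw[OF d(1) m(1) m(2)] k(1) by blast
    moreover have rV: "rot (rot x) \<in> VD" "\<not> isreal (rot (rot x))" using V.rotin V.realrot xV nx by auto
    ultimately have "col (rot (rot x)) = snd y" using colv eR by auto
    moreover have "col x = (\<not> snd y)" using colv[OF xV nx d] F1 y by auto
    ultimately show ?thesis by auto
  qed
  have P3: "col (arc x) \<noteq> col x" if xV: "x \<in> VD" for x
  proof (cases "isreal x")
    case True
    obtain y where y: "y \<in> H \<times> UNIV" "x = f y" using F2 xV True by blast
    have cx: "col x = snd y" using True F1 y unfolding col_def by auto
    have aV: "arc x \<in> VD" using V.arcin xV .
    show ?thesis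
    proof (cases "isreal (arc x)")
      case True
      define e where "e = f (med_arc H \<sigma> y)"
      have eR: "e \<in> VD" "isreal e" "colr e = (\<not> snd y)" using F1 F3 y unfolding e_def by auto
      obtain m where m: "e = (V.p^^m) (arc x)" "\<forall>j<m. \<not> isreal ((V.p^^j) (arc x))"
        using V.sr_idx fs[OF y(1)] y(2) e_def by blast
      have "m = 0" using m(2) True by (metis funpow_0 gr0I)
      then have "e = arc x" using m by simp
      then show ?thesis using eR cx True unfolding col_def by auto
    next
      case False
      have "V.sr x (arc x)" by (rule strand_reach.start)
      then have "col (arc x) = (\<not> colr x)" using colv aV False xV \<open>isreal x\<close> by blast
      then show ?thesis using cx F1 y by auto
    qed
  next
    case False
    obtain d where d: "d \<in> VD" "isreal d" "V.sr d x" using allr xV False by blast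
    obtain k where k: "x = (V.p^^k) (arc d)" "\<forall>j<k. \<not> isreal ((V.p^^j) (arc d))"
      using V.sr_idx d(3) by blast
    have cx: "col x = (\<not> colr d)" using colv xV False d by blast
    show ?thesis
    proof (cases k)
      case 0
      then have "arc x = d" using k V.arcarc d by simp
      then show ?thesis using cx d unfolding col_def by auto
    next
      case (Suc k')
      let ?a = "(V.p^^k') (arc d)"
      have aV: "?a \<in> VD" using V.idx_in d by blast
      have na: "\<not> isreal ?a" using k Suc by auto
      have "x = arc (rot (rot ?a))" using k Suc by (simp add: V.p_def[of ?a])
      then have ax: "arc x = rot (rot ?a)" using V.arcarc V.rotin aV by simp
      have "V.sr d ?a" using V.idx_sr k Suc by auto
      then have "col ?a = (\<not> colr d)" using colv aV na d by blast
      then have "col (arc x) = colr d" using P2[OF aV na] ax by auto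
      then show ?thesis using cx by auto
    qed
  qed
  show ?thesis unfolding checkerboard_colorable_def
  proof (intro exI ballI conjI impI)
    fix x assume xV: "x \<in> VD"
    show "col (arc x) \<noteq> col x" using P3 xV .
    show "col (rot (rot x)) \<noteq> col x" if "\<not> isreal x" using P2 xV that .
    show "col (rot x) \<noteq> col x" if xr: "isreal x"
    proof -
      obtain y where y: "y \<in> H \<times> UNIV" "x = f y" using F2 xV xr by blast
      have "rot x = f (med_rot \<alpha> y)" using fr y by simp
      then have "col (rot x) = (\<not> snd y)" using F1 F3 y unfolding col_def by auto
      moreover have "col x = snd y" using xr F1 y unfolding col_def by auto
      ultimately show ?thesis by auto
    qed
  qed
qed

end
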